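(* Let $n\ge1$. (1) The number of plane trees with $n$ edges having exactly one old leaf is $2^{n-1}$. (2) The number of plane trees with $n$ edges having no young leaves is the Motzkin number $M_{n-1}$.
   Context: A plane tree is a rooted tree in which the children of each vertex are linearly ordered (left to right). A leaf is a vertex with no children; by convention the tree consisting of a single vertex (no edges) has no leaves. A leaf is an old leaf if it is the leftmost child of its parent, and a young leaf otherwise. The Motzkin number $M_m$ is the number of lattice paths from $(0,0)$ to $(m,0)$ with steps $(1,1),(1,-1),(1,0)$ never going below the $x$-axis; equivalently $M_m=\sum_{r}\binom{m}{2r}\frac{1}{r+1}\binom{2r}{r}$. *)

theory Defs
  imports Main
begin

datatype ptree = Node "ptree list"

fun edges :: "ptree \<Rightarrow> nat" where
  "edges (Node ts) = length ts + sum_list (map edges ts)"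

fun is_leaf_tree :: "ptree \<Rightarrow> bool" where
  "is_leaf_tree (Node ts) = (ts = [])"

text \<open>Old leaves: leaves that are the leftmost child of their parent.
  The root is never a leaf (it has no parent), so a single vertex has no leaves.\<close>
fun old_leaves :: "ptree \<Rightarrow> nat" where
  "old_leaves (Node ts) =
     (case ts of [] \<Rightarrow> 0 | t # _ \<Rightarrow> (if is_leaf_tree t then 1 else 0))
     + sum_list (map old_leaves ts)"

fun young_leaves :: "ptree \<Rightarrow> nat" where
  "young_leaves (Node ts) =
     (case ts of [] \<Rightarrow> 0 | _ # rs \<Rightarrow> length (filter is_leaf_tree rs))
     + sum_list (map young_leaves ts)"

text \<open>Motzkin numbers via the given binomial/Catalan sum (Catalan numbers are exact integers).\<close>
definition motzkin :: "nat \<Rightarrow> nat" where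
  "motzkin m = (\<Sum>r\<le>m. (m choose (2*r)) * ((2*r choose r) div (r + 1)))"

end

theory Submission
  imports Defs
begin

fun B :: "nat \<Rightarrow> nat \<Rightarrow> nat" where
  "B 0 h = (if h = 0 then 1 else 0)"
| "B (Suc j) h = (if h = 0 then 0 else B j (h - 1)) + B j (Suc h)"

lemma B_zero: "h > j \<Longrightarrow> B j h = 0"
  by (induction j arbitrary: h) auto

lemma B_odd: "odd (j + h) \<Longrightarrow> B j h = 0"
proof (induction j arbitrary: h)
  case 0 then show ?case by (cases h) auto
next
  case (Suc j)
  then show ?case by (cases h) auto
qed

lemma B_closed: "int (B (2*u+h) h) = int ((2*u+h) choose u) - int ((2*u+h) choose (u+h+1))"
proof (induction "2*u+h" arbitrary: u h)
  case 0
  then show ?case by auto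
next
  case (Suc j)
  show ?case
  proof (cases h)
    case 0
    then obtain u' where u: "u = Suc u'" using Suc by (cases u) auto
    have j: "j = 2*u' + 1" using Suc(2) 0 u by simp
    have "B (Suc j) h = B j 1" using 0 by simp
    then have "int (B (Suc j) h) = int (j choose u') - int (j choose (u'+2))"
      using Suc(1)[of u' 1] j by simp
    moreover have "(Suc j choose u) = (j choose u') + (j choose u)" using u by simp
    moreover have "(Suc j choose (u+h+1)) = (j choose u) + (j choose (u'+2))" using u 0 by simp
    ultimately show ?thesis using Suc(2) by simp
  next
    case (Suc h')
    show ?thesis
    proof (cases u)
      case 0
      have "j = h'" using Suc.hyps(2) \<open>h = Suc h'\<close> 0 by simp
      then have "B (Suc j) h = B j j" using \<open>h = Suc h'\<close> B_zero by simp
      moreover have "int (B j j) = 1" using Suc.hyps(1)[of 0 j] by simp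
      ultimately show ?thesis using 0 \<open>j = h'\<close> \<open>h = Suc h'\<close> Suc.hyps(2) by simp
    next
      case (Suc u')
      have j1: "j = 2*u + h'" using Suc.hyps(2) \<open>h = Suc h'\<close> by simp
      have j2: "j = 2*u' + Suc h" using Suc.hyps(2) \<open>u = Suc u'\<close> by simp
      have "int (B (Suc j) h) = int (B j h') + int (B j (Suc h))" using \<open>h = Suc h'\<close> by simp
      also have "\<dots> = (int (j choose u) - int (j choose (u+h'+1))) + (int (j choose u') - int (j choose (u'+Suc h+1)))"
      proof -
        have e1: "int (B j h') = int (j choose u) - int (j choose (u+h'+1))"
          using Suc.hyps(1)[OF j1] by (simp only: j1)
        have e2: "int (B j (Suc h)) = int (j choose u') - int (j choose (u'+Suc h+1))"
          using Suc.hyps(1)[OF j2] by (simp only: j2)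
        show ?thesis using e1 e2 by simp
      qed
      also have "\<dots> = int (Suc j choose u) - int (Suc j choose (u+h+1))"
        using \<open>u = Suc u'\<close> \<open>h = Suc h'\<close> by simp
      finally show ?thesis using Suc.hyps(2) by simp
    qed
  qed
qed

lemma B_cat: "B (2*u) 0 = ((2*u) choose u) div (u+1)"
proof -
  have "int (B (2*u) 0) = int ((2*u) choose u) - int ((2*u) choose (u+1))"
    using B_closed[of u 0] by simp
  moreover have "(u+1) * ((2*u) choose (u+1)) = u * ((2*u) choose u)"
  proof -
    have "Suc u * ((2*u) choose Suc u) = (2*u) * ((2*u - 1) choose u)" by (rule binomial_absorption)
    also have "\<dots> = (2*u - u) * ((2*u) choose u)" by (rule binomial_absorb_comp[symmetric])
    finally show ?thesis by simp
  qed
  ultimately have "(u+1) * B (2*u) 0 = (2*u) choose u"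
  proof -
    assume e1: "int (B (2*u) 0) = int ((2*u) choose u) - int ((2*u) choose (u+1))"
      and e2: "(u+1) * ((2*u) choose (u+1)) = u * ((2*u) choose u)"
    have e3: "(int u + 1) * int ((2*u) choose (u+1)) = int u * int ((2*u) choose u)"
      using arg_cong[OF e2, of int] by (simp add: algebra_simps)
    have "int ((u+1) * B (2*u) 0) = (int u + 1) * int (B (2*u) 0)" by (simp add: algebra_simps)
    also have "\<dots> = (int u + 1) * (int ((2*u) choose u) - int ((2*u) choose (u+1)))"
      by (simp only: e1)
    also have "\<dots> = int ((2*u) choose u)" using e3 by (simp add: algebra_simps)
    finally show ?thesis by (simp only: of_nat_eq_iff)
  qed
  then have "((2*u) choose u) div (u+1) = ((u+1) * B (2*u) 0) div (u+1)" by simp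
  then show ?thesis by (metis nonzero_mult_div_cancel_left add_gr_0 zero_less_one less_irrefl)
qed

definition Q :: "nat \<Rightarrow> nat \<Rightarrow> nat" where
  "Q m h = (\<Sum>j\<le>m. (m choose j) * B j h)"

lemma Q_alt: "Q m h = B 0 h + (\<Sum>i\<le>m. (m choose Suc i) * B (Suc i) h)"
proof -
  have "Q m h = (\<Sum>j\<le>Suc m. (m choose j) * B j h)" unfolding Q_def by simp
  also have "\<dots> = B 0 h + (\<Sum>i\<le>m. (m choose Suc i) * B (Suc i) h)"
    by (subst sum.atMost_Suc_shift) simp
  finally show ?thesis .
qed

lemma Q_Suc: "Q (Suc m) h = Q m h + (if h = 0 then 0 else Q m (h - 1)) + Q m (Suc h)"
proof -
  have "Q (Suc m) h = B 0 h + (\<Sum>i\<le>m. ((m choose i) + (m choose Suc i)) * B (Suc i) h)"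
    unfolding Q_def by (subst sum.atMost_Suc_shift) simp
  also have "\<dots> = B 0 h + (\<Sum>i\<le>m. (m choose Suc i) * B (Suc i) h) + (\<Sum>i\<le>m. (m choose i) * B (Suc i) h)"
    by (simp add: algebra_simps sum.distrib)
  also have "(\<Sum>i\<le>m. (m choose i) * B (Suc i) h) = (if h = 0 then 0 else Q m (h - 1)) + Q m (Suc h)"
    unfolding Q_def by (simp add: algebra_simps sum.distrib)
  finally show ?thesis using Q_alt[of m h] by simp
qed

fun Lf :: "nat \<Rightarrow> nat \<Rightarrow> nat" where
  "Lf 0 k = (if k = 0 then 1 else 0)"
| "Lf (Suc n) 0 = 0"
| "Lf (Suc n) (Suc k) = Lf n k + Lf n (Suc k) + Lf n (Suc (Suc k))"

lemma Lf_Q: "Lf (Suc n) (Suc k) = Q n k"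
proof (induction n arbitrary: k)
  case 0 then show ?case by (simp add: Q_def)
next
  case (Suc n)
  show ?case
    using Suc by (cases k) (simp_all add: Q_Suc)
qed

lemma sum_even_odd: "(\<Sum>j<2*(M::nat). (g::nat\<Rightarrow>nat) j) = (\<Sum>r<M. g (2*r) + g (2*r+1))"
  by (induction M) (simp_all add: algebra_simps)

lemma Q_motzkin: "Q m 0 = motzkin m"
proof -
  define g where "g j = (m choose j) * B j 0" for j
  have "Q m 0 = (\<Sum>j<2*(m+1). g j)"
    unfolding Q_def g_def
    by (rule sum.mono_neutral_left) auto
  also have "\<dots> = (\<Sum>r<m+1. g (2*r))"
    unfolding sum_even_odd by (simp add: g_def B_odd)
  also have "\<dots> = motzkin m"
    unfolding motzkin_def g_def by (intro sum.cong) (auto simp: B_cat)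
  finally show ?thesis .
qed


fun kids :: "ptree \<Rightarrow> ptree list" where "kids (Node ts) = ts"

lemma leaf_iff: "is_leaf_tree t \<longleftrightarrow> t = Node []"
  by (cases t) auto

lemma edges_ge: "edges (Node ts) \<ge> length ts" by simp

lemma nonleaf_edges: "\<not> is_leaf_tree t \<Longrightarrow> edges t \<ge> 1"
  by (cases t) (auto simp: Suc_le_eq)

lemma young_Node: "young_leaves (Node ts) = 0 \<longleftrightarrow>
   (\<forall>t\<in>set (tl ts). \<not> is_leaf_tree t) \<and> (\<forall>t\<in>set ts. young_leaves t = 0)"
  by (cases ts) (auto simp: filter_empty_conv[symmetric])

definition LS :: "nat \<Rightarrow> nat \<Rightarrow> ptree list set" where
  "LS n k = {ts. length ts = k \<and> (\<forall>t\<in>set ts. young_leaves t = 0 \<and> \<not> is_leaf_tree t)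
      \<and> sum_list (map edges ts) = n}"

definition f1 :: "ptree list \<Rightarrow> ptree list" where "f1 ts = Node [Node []] # ts"
definition f2 :: "ptree list \<Rightarrow> ptree list" where "f2 ts = Node [hd ts] # tl ts"
definition f3 :: "ptree list \<Rightarrow> ptree list" where
  "f3 ts = Node (hd (kids (hd ts)) # hd (tl ts) # tl (kids (hd ts))) # tl (tl ts)"

lemma LS_0: "LS n 0 = (if n = 0 then {[]} else {})"
  unfolding LS_def by auto

lemma LS_Suc_0: "LS 0 (Suc k) = {}"
proof -
  { fix ts assume "ts \<in> LS 0 (Suc k)"
    then obtain t r where ts: "ts = t # r" and "\<not> is_leaf_tree t" and "edges t + sum_list (map edges r) = 0"
      unfolding LS_def by (cases ts) auto
    then have False using nonleaf_edges[of t] by simp }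
  then show ?thesis by blast
qed

lemma LS_split: "LS (Suc n) (Suc k) = f1 ` LS n k \<union> f2 ` LS n (Suc k) \<union> f3 ` LS n (Suc (Suc k))"
proof (intro equalityI subsetI)
  fix ts assume "ts \<in> LS (Suc n) (Suc k)"
  then obtain T r where ts: "ts = T # r" and len: "length r = k"
    and T: "young_leaves T = 0" "\<not> is_leaf_tree T"
    and r: "\<forall>t\<in>set r. young_leaves t = 0 \<and> \<not> is_leaf_tree t"
    and e: "edges T + sum_list (map edges r) = Suc n"
    unfolding LS_def by (cases ts) auto
  obtain y xs where Tyx: "T = Node (y # xs)" using T(2) by (cases T rule: kids.cases) (auto simp: neq_Nil_conv)
  have y: "young_leaves y = 0" and xs: "\<forall>t\<in>set xs. young_leaves t = 0 \<and> \<not> is_leaf_tree t"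
    using T(1) unfolding Tyx young_Node by auto
  show "ts \<in> f1 ` LS n k \<union> f2 ` LS n (Suc k) \<union> f3 ` LS n (Suc (Suc k))"
  proof (cases xs)
    case Nil
    show ?thesis
    proof (cases "is_leaf_tree y")
      case True
      then have "y = Node []" by (simp add: leaf_iff)
      then have "ts = f1 r" "r \<in> LS n k" using ts Tyx Nil len r e by (auto simp: f1_def LS_def)
      then show ?thesis by blast
    next
      case False
      then have "ts = f2 (y # r)" "y # r \<in> LS n (Suc k)" using ts Tyx Nil len r e y by (auto simp: f2_def LS_def)
      then show ?thesis by blast
    qed
  next
    case (Cons x xr)
    have a: "young_leaves (Node (y # xr)) = 0" "\<not> is_leaf_tree (Node (y # xr))"
      using y xs Cons unfolding young_Node by auto
    have "ts = f3 (Node (y # xr) # x # r)" using ts Tyx Cons by (simp add: f3_def)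
    moreover have "Node (y # xr) # x # r \<in> LS n (Suc (Suc k))"
      using a xs Cons len r e Tyx by (auto simp: LS_def)
    ultimately show ?thesis by blast
  qed
next
  fix ts assume "ts \<in> f1 ` LS n k \<union> f2 ` LS n (Suc k) \<union> f3 ` LS n (Suc (Suc k))"
  then consider (a) r where "r \<in> LS n k" "ts = f1 r"
    | (b) r where "r \<in> LS n (Suc k)" "ts = f2 r"
    | (c) r where "r \<in> LS n (Suc (Suc k))" "ts = f3 r" by blast
  then show "ts \<in> LS (Suc n) (Suc k)"
  proof cases
    case a then show ?thesis by (auto simp: LS_def f1_def)
  next
    case b
    then obtain y r' where "r = y # r'" unfolding LS_def by (cases r) auto
    then show ?thesis using b by (auto simp: LS_def f2_def young_Node)
  next
    case c
    then obtain a x r' where r: "r = a # x # r'" unfolding LS_def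
      by (cases r rule: remdups_adj.cases) auto
    then have "\<not> is_leaf_tree a" using c unfolding LS_def by auto
    then obtain y xr where "a = Node (y # xr)" by (cases a rule: kids.cases) (auto simp: neq_Nil_conv)
    then show ?thesis using c r by (auto simp: LS_def f3_def young_Node)
  qed
qed

lemma inj_f1: "inj f1" by (auto simp: inj_def f1_def)

lemma inj_f2: "inj_on f2 (LS n (Suc k))"
  by (auto simp: inj_on_def f2_def LS_def) (metis list.collapse list.size(3) nat.distinct(1))

lemma inj_f3: "inj_on f3 (LS n (Suc (Suc k)))"
proof (rule inj_onI)
  fix r s assume r: "r \<in> LS n (Suc (Suc k))" and s: "s \<in> LS n (Suc (Suc k))" and eq: "f3 r = f3 s"
  have shape: "\<exists>y xr x r'. ts = Node (y # xr) # x # r'" if tsL: "ts \<in> LS n (Suc (Suc k))" for ts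
  proof -
    obtain a x r' where ts: "ts = a # x # r'" using tsL unfolding LS_def
      by (cases ts rule: remdups_adj.cases) auto
    then have "\<not> is_leaf_tree a" using tsL unfolding LS_def by auto
    then obtain y xr where "a = Node (y # xr)" by (cases a rule: kids.cases) (auto simp: neq_Nil_conv)
    then show ?thesis using ts by blast
  qed
  obtain y1 xr1 x1 r1 where 1: "r = Node (y1 # xr1) # x1 # r1" using shape[OF r] by blast
  obtain y2 xr2 x2 r2 where 2: "s = Node (y2 # xr2) # x2 # r2" using shape[OF s] by blast
  show "r = s" using eq 1 2 by (simp add: f3_def)
qed

lemma LS_card: "finite (LS n k) \<and> card (LS n k) = Lf n k"
proof (induction n arbitrary: k)
  case 0
  then show ?case by (cases k) (auto simp: LS_0 LS_Suc_0)
next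
  case (Suc n)
  show ?case
  proof (cases k)
    case 0 then show ?thesis by (simp add: LS_0)
  next
    case (Suc k')
    let ?A = "f1 ` LS n k'" and ?B = "f2 ` LS n (Suc k')" and ?C = "f3 ` LS n (Suc (Suc k'))"
    have fA: "finite ?A" "card ?A = Lf n k'"
      using Suc.IH[of k'] card_image[OF inj_on_subset[OF inj_f1]] by auto
    have fB: "finite ?B" "card ?B = Lf n (Suc k')"
      using Suc.IH[of "Suc k'"] card_image[OF inj_f2] by auto
    have fC: "finite ?C" "card ?C = Lf n (Suc (Suc k'))"
      using Suc.IH[of "Suc (Suc k')"] card_image[OF inj_f3] by auto
    have dAB: "?A \<inter> ?B = {}"
    proof -
      { fix r s assume "r \<in> LS n k'" "s \<in> LS n (Suc k')" "f1 r = f2 s"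
        then have False unfolding LS_def f1_def f2_def
          by (cases s) (auto simp: leaf_iff) }
      then show ?thesis by blast
    qed
    have dC: "(?A \<union> ?B) \<inter> ?C = {}"
    proof -
      { fix r s assume "r \<in> LS n k' \<union> LS n (Suc k')" "s \<in> LS n (Suc (Suc k'))" "f1 r = f3 s \<or> f2 r = f3 s"
        then have False unfolding f1_def f2_def f3_def by auto }
      then show ?thesis by blast
    qed
    have "card (LS (Suc n) k) = card ?A + card ?B + card ?C"
      unfolding Suc LS_split using fA fB fC dAB dC by (simp add: card_Un_disjoint)
    then show ?thesis unfolding Suc LS_split using fA fB fC by simp
  qed
qed

lemma part2: "n \<ge> 1 \<Longrightarrow> card {t. edges t = n \<and> young_leaves t = 0} = motzkin (n - 1)"
proof -
  assume n: "n \<ge> 1"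
  have "LS n 1 = (\<lambda>t. [t]) ` {t. edges t = n \<and> young_leaves t = 0}"
  proof (intro equalityI subsetI)
    fix ts assume "ts \<in> LS n 1"
    then obtain t where "ts = [t]" "edges t = n" "young_leaves t = 0" unfolding LS_def
      by (auto simp: length_Suc_conv)
    then show "ts \<in> (\<lambda>t. [t]) ` {t. edges t = n \<and> young_leaves t = 0}" by blast
  next
    fix ts assume "ts \<in> (\<lambda>t. [t]) ` {t. edges t = n \<and> young_leaves t = 0}"
    then obtain t where "ts = [t]" "edges t = n" "young_leaves t = 0" by blast
    moreover have "\<not> is_leaf_tree t" using n \<open>edges t = n\<close> by (auto simp: leaf_iff)
    ultimately show "ts \<in> LS n 1" unfolding LS_def by auto
  qed
  then have "card {t. edges t = n \<and> young_leaves t = 0} = card (LS n 1)"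
    by (simp add: card_image inj_on_def)
  also have "\<dots> = Lf n 1" using LS_card by blast
  also have "\<dots> = Q (n - 1) 0" using n Lf_Q[of "n-1" 0] by simp
  finally show ?thesis by (simp add: Q_motzkin)
qed


lemma old_pos: "\<not> is_leaf_tree t \<Longrightarrow> old_leaves t \<ge> 1"
proof (induction t)
  case (Node ts)
  then obtain h r where ts: "ts = h # r" by (cases ts) auto
  show ?case
  proof (cases "is_leaf_tree h")
    case True then show ?thesis using ts by simp
  next
    case False then have "old_leaves h \<ge> 1" using Node.IH ts by simp
    then show ?thesis using ts by simp
  qed
qed

lemma old_zero_iff: "old_leaves t = 0 \<longleftrightarrow> is_leaf_tree t"
proof
  assume "old_leaves t = 0" then show "is_leaf_tree t" using old_pos[of t] by fastforce
next
  assume "is_leaf_tree t" then show "old_leaves t = 0" by (cases t) simp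
qed

lemma old_one_Node: "old_leaves (Node (h # r)) = 1 \<longleftrightarrow>
   (\<forall>x\<in>set r. is_leaf_tree x) \<and> (is_leaf_tree h \<or> old_leaves h = 1)"
proof -
  have s0: "sum_list (map old_leaves r) = 0 \<longleftrightarrow> (\<forall>x\<in>set r. is_leaf_tree x)"
    by (simp add: old_zero_iff)
  show ?thesis
  proof (cases "is_leaf_tree h")
    case True
    then have "old_leaves h = 0" by (simp add: old_zero_iff)
    then have "old_leaves (Node (h # r)) = 1 + sum_list (map old_leaves r)" using True by simp
    then show ?thesis using s0 True by simp
  next
    case False
    then have h1: "old_leaves h \<ge> 1" by (rule old_pos)
    have eq: "old_leaves (Node (h # r)) = old_leaves h + sum_list (map old_leaves r)" using False by simp
    have c: "(old_leaves h + sum_list (map old_leaves r) = 1) = (old_leaves h = 1 \<and> sum_list (map old_leaves r) = 0)"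
      using h1 by arith
    show ?thesis unfolding eq c s0 using False by blast
  qed
qed

lemma all_leaf_repl: "(\<forall>x\<in>set r. is_leaf_tree x) \<longleftrightarrow> r = replicate (length r) (Node [])"
  by (metis leaf_iff replicate_length_same in_set_replicate)

definition S1 :: "nat \<Rightarrow> ptree set" where "S1 n = {t. edges t = n \<and> old_leaves t = 1}"

definition g :: "nat \<Rightarrow> nat \<Rightarrow> ptree \<Rightarrow> ptree" where
  "g n m h = Node (h # replicate (n - m) (Node []))"

lemma sum_repl0 [simp]: "sum_list (replicate k (0::nat)) = 0"
  by (induction k) auto

lemma edges_repl: "sum_list (map edges (replicate k (Node []))) = 0"
  by (induction k) auto

lemma S1_0: "S1 0 = {}"
proof -
  { fix t assume "t \<in> S1 0"
    then have "edges t = 0" "old_leaves t = 1" by (auto simp: S1_def)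
    then have False by (cases t) auto }
  then show ?thesis by blast
qed

lemma S1_nonleaf: "t \<in> S1 m \<Longrightarrow> \<not> is_leaf_tree t"
  by (auto simp: S1_def old_zero_iff[symmetric])

lemma S1_Suc: "S1 (Suc n) = {Node (replicate (Suc n) (Node []))} \<union> (\<Union>m\<le>n. g n m ` S1 m)"
proof (intro equalityI subsetI)
  fix t assume t: "t \<in> S1 (Suc n)"
  then obtain ts where tts: "t = Node ts" by (cases t) auto
  with t obtain h r where ts: "ts = h # r" by (cases ts) (auto simp: S1_def)
  from t have e: "edges t = Suc n" and o1: "old_leaves t = 1" by (auto simp: S1_def)
  have "old_leaves (Node (h # r)) = 1" using o1 tts ts by simp
  then have o: "(\<forall>x\<in>set r. is_leaf_tree x) \<and> (is_leaf_tree h \<or> old_leaves h = 1)"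
    using old_one_Node[of h r] by blast
  then have "r = replicate (length r) (Node [])" using all_leaf_repl by blast
  then obtain k where rr: "r = replicate k (Node [])" by blast
  have e2: "Suc k + edges h = Suc n" using e unfolding tts ts rr by (simp add: edges_repl)
  show "t \<in> {Node (replicate (Suc n) (Node []))} \<union> (\<Union>m\<le>n. g n m ` S1 m)"
  proof (cases "is_leaf_tree h")
    case True
    then have "h = Node []" by (simp add: leaf_iff)
    then have "t = Node (replicate (Suc n) (Node []))" using e2 unfolding rr tts ts by simp
    then show ?thesis by blast
  next
    case False
    then have "old_leaves h = 1" using o by blast
    then have "h \<in> S1 (edges h)" by (simp add: S1_def)
    moreover have "k = n - edges h" using e2 by simp
    then have "t = g n (edges h) h" unfolding tts ts rr g_def by simp
    moreover have "edges h \<le> n" using e2 by simp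
    ultimately show ?thesis by blast
  qed
next
  fix t assume "t \<in> {Node (replicate (Suc n) (Node []))} \<union> (\<Union>m\<le>n. g n m ` S1 m)"
  then consider "t = Node (replicate (Suc n) (Node []))" | m h where "m \<le> n" "h \<in> S1 m" "t = g n m h"
    by blast
  then show "t \<in> S1 (Suc n)"
  proof cases
    case 1
    then show ?thesis by (simp add: S1_def edges_repl old_one_Node)
  next
    case 2
    then show ?thesis using S1_nonleaf[OF 2(2)]
      by (auto simp: S1_def g_def edges_repl old_one_Node)
  qed
qed

lemma sum_pow: "1 + (\<Sum>m\<le>n. (if m = 0 then 0 else 2 ^ (m - 1) :: nat)) = 2 ^ n"
  by (induction n) auto

lemma S1_card: "finite (S1 n) \<and> card (S1 n) = (if n = 0 then 0 else 2 ^ (n - 1))"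
proof (induction n rule: less_induct)
  case (less n)
  show ?case
  proof (cases n)
    case 0 then show ?thesis by (simp add: S1_0)
  next
    case (Suc n')
    have IH: "finite (S1 m) \<and> card (S1 m) = (if m = 0 then 0 else 2 ^ (m - 1))" if "m \<le> n'" for m
      using less that Suc by simp
    have inj: "inj_on (g n' m) (S1 m)" for m by (auto simp: inj_on_def g_def)
    have fin: "finite (g n' m ` S1 m)" if "m \<le> n'" for m using IH[OF that] by simp
    have disj: "\<forall>i\<in>{..n'}. \<forall>j\<in>{..n'}. i \<noteq> j \<longrightarrow> g n' i ` S1 i \<inter> g n' j ` S1 j = {}"
      by (auto simp: g_def S1_def)
    have cU: "card (\<Union>m\<le>n'. g n' m ` S1 m) = (\<Sum>m\<le>n'. card (g n' m ` S1 m))"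
      by (rule card_UN_disjoint) (use fin disj in auto)
    also have "\<dots> = (\<Sum>m\<le>n'. (if m = 0 then 0 else 2 ^ (m - 1)))"
      by (rule sum.cong) (use IH card_image[OF inj] in auto)
    finally have cU': "card (\<Union>m\<le>n'. g n' m ` S1 m) = (\<Sum>m\<le>n'. (if m = 0 then 0 else 2 ^ (m - 1)))" .
    have nl: "Node [] \<notin> S1 m" for m by (simp add: S1_def)
    have nin: "Node (replicate (Suc n') (Node [])) \<notin> (\<Union>m\<le>n'. g n' m ` S1 m)"
      using nl by (auto simp: g_def)
    have finU: "finite (\<Union>m\<le>n'. g n' m ` S1 m)" using fin by auto
    have "card (S1 n) = 1 + card (\<Union>m\<le>n'. g n' m ` S1 m)"
      unfolding Suc S1_Suc using nin finU by simp
    then show ?thesis using cU' sum_pow[of n'] finU unfolding Suc S1_Suc by simp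
  qed
qed

theorem mainTheorem5:
  fixes n :: nat
  assumes "n \<ge> 1"
  shows "card {t. edges t = n \<and> old_leaves t = 1} = 2 ^ (n - 1) \<and>
         card {t. edges t = n \<and> young_leaves t = 0} = motzkin (n - 1)"
proof
  show "card {t. edges t = n \<and> old_leaves t = 1} = 2 ^ (n - 1)"
    using S1_card[of n] assms unfolding S1_def by simp
  show "card {t. edges t = n \<and> young_leaves t = 0} = motzkin (n - 1)"
    using part2[OF assms] .
qed

end
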